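(* For every $n\ge 2$, the transition monoid of the automaton $\mathcal{V}_n$ is the full transformation monoid $T_n$ of its state set, and the reset threshold of $\mathcal{V}_n$ equals $\frac{n(n-1)}{2}$.
   Context: For a DFA $\langle Q,\Sigma,\delta\rangle$, the transition monoid is the monoid of transformations of $Q$ generated by the actions of the letters; $T_n$ denotes the monoid of all maps from an $n$-element set to itself. The reset threshold is the minimum length of a word $w$ with $|Q\cdot w|=1$ (words act letter by letter from left to right). The automaton $\mathcal{V}_n$ has states $q_0,\dots,q_{n-1}$ and letters $a_1,\dots,a_n$: for $1\le i\le n-1$, the letter $a_i$ swaps $q_{i-1}$ and $q_i$ and fixes all other states; the letter $a_n$ maps both $q_0$ and $q_1$ to $q_0$ and fixes $q_2,\dots,q_{n-1}$. *)

theory Defs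
  imports "HOL-Library.FuncSet"
begin

definition word_act :: "('q \<Rightarrow> 'a \<Rightarrow> 'q) \<Rightarrow> 'q \<Rightarrow> 'a list \<Rightarrow> 'q" where
  "word_act delta q w = foldl delta q w"

definition transition_monoid ::
  "'q set \<Rightarrow> 'a set \<Rightarrow> ('q \<Rightarrow> 'a \<Rightarrow> 'q) \<Rightarrow> ('q \<Rightarrow> 'q) set" where
  "transition_monoid Q A delta =
     {restrict (\<lambda>q. word_act delta q w) Q | w. w \<in> lists A}"

definition full_transformation_monoid :: "'q set \<Rightarrow> ('q \<Rightarrow> 'q) set" where
  "full_transformation_monoid Q = Q \<rightarrow>\<^sub>E Q"

definition synchronizing_word :: "'q set \<Rightarrow> 'a set \<Rightarrow> ('q \<Rightarrow> 'a \<Rightarrow> 'q) \<Rightarrow> 'a list \<Rightarrow> bool" where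
  "synchronizing_word Q A delta w \<longleftrightarrow>
     w \<in> lists A \<and> card ((\<lambda>q. word_act delta q w) ` Q) = 1"

definition reset_threshold :: "'q set \<Rightarrow> 'a set \<Rightarrow> ('q \<Rightarrow> 'a \<Rightarrow> 'q) \<Rightarrow> nat" where
  "reset_threshold Q A delta =
     (LEAST m. \<exists>w. synchronizing_word Q A delta w \<and> length w = m)"

text \<open>The automaton V_n: states q_0..q_{n-1} encoded as 0..n-1, letters a_1..a_n encoded as 1..n.\<close>
definition V_states :: "nat \<Rightarrow> nat set" where
  "V_states n = {0..<n}"

definition V_letters :: "nat \<Rightarrow> nat set" where
  "V_letters n = {1..n}"

definition V_delta :: "nat \<Rightarrow> nat \<Rightarrow> nat \<Rightarrow> nat" where
  "V_delta n q i =
     (if 1 \<le> i \<and> i \<le> n - 1 then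
        (if q = i - 1 then i else if q = i then i - 1 else q)
      else if i = n then
        (if q = 0 \<or> q = 1 then 0 else q)
      else q)"

end

theory Submission
  imports Defs "HOL-Combinatorics.Permutations"
begin

definition RR :: "nat \<Rightarrow> (nat \<Rightarrow> nat) \<Rightarrow> bool" where
  "RR n f \<longleftrightarrow> (\<exists>w\<in>lists (V_letters n). \<forall>q\<in>V_states n. word_act (V_delta n) q w = f q)"

lemma word_act_append: "word_act d q (u @ v) = word_act d (word_act d q u) v"
  by (simp add: word_act_def)

lemma word_act_Cons: "word_act d q (a # v) = word_act d (d q a) v"
  by (simp add: word_act_def)

lemma delta_in: "q < n \<Longrightarrow> V_delta n q a < n"
  by (auto simp: V_delta_def)

lemma word_act_in: "q < n \<Longrightarrow> word_act (V_delta n) q w < n"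
  by (induction w arbitrary: q) (auto simp: word_act_Cons delta_in word_act_def)

lemma RR_id: "RR n id"
  unfolding RR_def by (rule bexI[of _ "[]"]) (auto simp: word_act_def)

lemma RR_cong: "RR n f \<Longrightarrow> (\<And>q. q < n \<Longrightarrow> f q = g q) \<Longrightarrow> RR n g"
  unfolding RR_def V_states_def by auto

lemma RR_comp:
  assumes "RR n f" "RR n g" "\<And>q. q < n \<Longrightarrow> f q < n"
  shows "RR n (g \<circ> f)"
proof -
  obtain u where u: "u \<in> lists (V_letters n)" "\<forall>q\<in>V_states n. word_act (V_delta n) q u = f q"
    using assms(1) unfolding RR_def by blast
  obtain v where v: "v \<in> lists (V_letters n)" "\<forall>q\<in>V_states n. word_act (V_delta n) q v = g q"
    using assms(2) unfolding RR_def by blast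
  show ?thesis unfolding RR_def
    by (rule bexI[of _ "u @ v"]) (use u v assms(3) in \<open>auto simp: word_act_append V_states_def\<close>)
qed

lemma RR_letter:
  assumes "1 \<le> i" "i \<le> n"
  shows "RR n (\<lambda>q. V_delta n q i)"
  unfolding RR_def
  by (rule bexI[of _ "[i]"]) (use assms in \<open>auto simp: word_act_def V_letters_def\<close>)

lemma RR_adj:
  assumes "Suc c < n"
  shows "RR n (Transposition.transpose c (Suc c))"
proof -
  have "RR n (\<lambda>q. V_delta n q (Suc c))" using assms by (intro RR_letter) auto
  then show ?thesis
    by (rule RR_cong) (use assms in \<open>auto simp: V_delta_def Transposition.transpose_def\<close>)
qed

lemma RR_merge:
  assumes "n \<ge> 2"
  shows "RR n (\<lambda>q. if q = 0 \<or> q = 1 then 0 else q)"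
proof -
  have "RR n (\<lambda>q. V_delta n q n)" using assms by (intro RR_letter) auto
  then show ?thesis
    by (rule RR_cong) (use assms in \<open>auto simp: V_delta_def\<close>)
qed

lemma transpose_lt: "a < n \<Longrightarrow> b < n \<Longrightarrow> q < n \<Longrightarrow> Transposition.transpose a b q < n"
  by (auto simp: Transposition.transpose_def)

lemma RR_transp_lt:
  assumes "a < b" "b < n"
  shows "RR n (Transposition.transpose a b)"
  using assms
proof (induction b)
  case 0 then show ?case by simp
next
  case (Suc c)
  show ?case
  proof (cases "a = c")
    case True then show ?thesis using RR_adj Suc by simp
  next
    case False
    then have ac: "a < c" using Suc by simp
    have A: "RR n (Transposition.transpose c (Suc c))" using RR_adj Suc by simp
    have B: "RR n (Transposition.transpose a c)" using Suc ac by simp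
    have "RR n (Transposition.transpose c (Suc c) \<circ> (Transposition.transpose a c \<circ> Transposition.transpose c (Suc c)))"
      by (intro RR_comp A B) (use Suc ac in \<open>auto simp: Transposition.transpose_def\<close>)
    then show ?thesis
      by (rule RR_cong) (use ac in \<open>auto simp: Transposition.transpose_def\<close>)
  qed
qed

lemma RR_transp:
  assumes "a < n" "b < n"
  shows "RR n (Transposition.transpose a b)"
proof -
  consider "a < b" | "a = b" | "b < a" by arith
  then show ?thesis
  proof cases
    case 1 then show ?thesis using RR_transp_lt assms by simp
  next
    case 2 then show ?thesis using RR_id by (simp add: id_def)
  next
    case 3 then show ?thesis using RR_transp_lt[of b a n] assms by (simp add: transpose_commute)
  qed
qed

lemma RR_permutes:
  assumes "p permutes {0..<n}"
  shows "RR n p"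
  using assms finite_atLeastLessThan
proof (induction rule: permutes_induct)
  case id then show ?case by (rule RR_id)
next
  case (swap a b p)
  have "RR n (Transposition.transpose a b \<circ> p)"
    by (intro RR_comp swap RR_transp) (use swap permutes_in_image[OF \<open>p permutes {0..<n}\<close>] in auto)
  then show ?case .
qed

lemma RR_collapse:
  assumes n: "n \<ge> 2" and xy: "x < n" "y < n" "x \<noteq> y"
  shows "RR n (\<lambda>q. if q = y then x else q)"
proof -
  define p1 where "p1 = Transposition.transpose 0 x"
  define y' where "y' = p1 y"
  define p2 where "p2 = Transposition.transpose 1 y'"
  define m where "m = (\<lambda>q::nat. if q = 0 \<or> q = 1 then 0 else q)"
  have y'lt: "y' < n" using xy n unfolding y'_def p1_def by (auto simp: Transposition.transpose_def)
  have y'0: "y' \<noteq> 0" using xy unfolding y'_def p1_def by (auto simp: Transposition.transpose_def)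
  have p1: "RR n p1" unfolding p1_def using xy n by (intro RR_transp) auto
  have p2: "RR n p2" unfolding p2_def using y'lt n by (intro RR_transp) auto
  have mm: "RR n m" unfolding m_def using n by (rule RR_merge)
  have p1i: "\<And>q. q < n \<Longrightarrow> p1 q < n" unfolding p1_def using xy n by (intro transpose_lt) auto
  have p2i: "\<And>q. q < n \<Longrightarrow> p2 q < n" unfolding p2_def using y'lt n by (intro transpose_lt) auto
  have mi: "\<And>q. q < n \<Longrightarrow> m q < n" unfolding m_def by auto
  have "RR n (p1 \<circ> (p2 \<circ> (m \<circ> (p2 \<circ> p1))))"
    by (intro RR_comp p1 p2 mm; simp add: p1i p2i mi)
  then show ?thesis
  proof (rule RR_cong)
    fix q assume "q < n"
    have A: "p2 0 = 0" using y'0 unfolding p2_def by (simp add: Transposition.transpose_def)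
    have B: "p1 0 = x" "p1 x = 0" "p1 y = y'" unfolding p1_def y'_def by (auto simp: Transposition.transpose_def)
    have C: "p2 y' = 1" unfolding p2_def by simp
    show "(p1 \<circ> (p2 \<circ> (m \<circ> (p2 \<circ> p1)))) q = (if q = y then x else q)"
    proof (cases "q = y")
      case True then show ?thesis using A B C by (simp add: m_def)
    next
      case F1: False
      show ?thesis
      proof (cases "q = x")
        case True then show ?thesis using A B C F1 by (simp add: m_def)
      next
        case F2: False
        define r where "r = p1 q"
        have r0: "r \<noteq> 0" using F2 xy unfolding r_def p1_def by (auto simp: Transposition.transpose_def)
        have ry: "r \<noteq> y'" using F1 unfolding r_def y'_def p1_def by (auto simp: Transposition.transpose_def split: if_splits)
        have p2r: "p2 r \<noteq> 0 \<and> p2 r \<noteq> 1" using r0 ry y'0 unfolding p2_def by (auto simp: Transposition.transpose_def)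
        have "p2 (p2 r) = r" unfolding p2_def by simp
        moreover have "p1 r = q" unfolding r_def p1_def by simp
        ultimately show ?thesis using p2r F1 by (simp add: m_def r_def[symmetric])
      qed
    qed
  qed
qed

lemma RR_all_aux:
  assumes n: "n \<ge> 2"
  shows "\<forall>f. (\<forall>q<n. f q < n) \<longrightarrow> n - card (f ` {0..<n}) = d \<longrightarrow> RR n f"
proof (induction d rule: less_induct)
  case (less d)
  show ?case
  proof (intro allI impI)
    fix f assume fi: "\<forall>q<n. f q < n" and fd: "n - card (f ` {0..<n}) = d"
    let ?Q = "{0..<n::nat}"
    have sub: "f ` ?Q \<subseteq> ?Q" using fi by auto
    show "RR n f"
    proof (cases "inj_on f ?Q")
      case True
      then have "f ` ?Q = ?Q"
        using card_subset_eq[OF finite_atLeastLessThan sub] card_image[OF True] by simp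
      then have "bij_betw f ?Q ?Q" using True by (simp add: bij_betw_def)
      define p where "p = (\<lambda>q. if q \<in> ?Q then f q else q)"
      have "bij_betw p ?Q ?Q"
        using bij_betw_cong[of ?Q p f ?Q] \<open>bij_betw f ?Q ?Q\<close> by (simp add: p_def)
      then have "p permutes ?Q"
        by (intro bij_imp_permutes) (auto simp: p_def)
      then have "RR n p" by (rule RR_permutes)
      then show ?thesis by (rule RR_cong) (simp add: p_def)
    next
      case False
      then obtain x y where xy: "x \<in> ?Q" "y \<in> ?Q" "x \<noteq> y" "f x = f y"
        unfolding inj_on_def by blast
      have "card (f ` ?Q) < card ?Q"
      proof -
        have "card (f`?Q) \<le> card ?Q" by (rule card_mono[OF _ sub]) simp
        moreover have "card (f`?Q) \<noteq> card ?Q" using False inj_on_iff_eq_card[of ?Q f] by simp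
        ultimately show ?thesis by simp
      qed
      then have "f ` ?Q \<noteq> ?Q" by auto
      then obtain z where z: "z \<in> ?Q" "z \<notin> f ` ?Q" using sub by blast
      define h where "h = f(y := z)"
      have img: "h ` ?Q = insert z (f ` ?Q)"
      proof -
        have eq: "insert y (?Q - {y}) = ?Q" using insert_Diff[OF xy(2)] .
        have "f ` ?Q = insert (f y) (f ` (?Q - {y}))"
          by (metis eq image_insert)
        moreover have "f y \<in> f ` (?Q - {y})" using xy by (intro rev_image_eqI[of x]) auto
        ultimately have "f ` ?Q = f ` (?Q - {y})" by (simp add: insert_absorb)
        moreover have "h ` ?Q = insert (h y) (h ` (?Q - {y}))"
          by (metis eq image_insert)
        moreover have "h ` (?Q - {y}) = f ` (?Q - {y})" unfolding h_def by (intro image_cong) auto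
        moreover have "h y = z" unfolding h_def by simp
        ultimately show ?thesis by simp
      qed
      have "card (h ` ?Q) = Suc (card (f ` ?Q))" using img z by simp
      have hi: "\<forall>q<n. h q < n" using fi z unfolding h_def by auto
      have "h ` ?Q \<subseteq> ?Q" using hi by auto
      then have "card (h ` ?Q) \<le> n" using card_mono[OF finite_atLeastLessThan, of "h ` ?Q" 0 n] by simp
      then have lt: "n - card (h ` ?Q) < d" using fd \<open>card (h ` ?Q) = Suc (card (f ` ?Q))\<close> by simp
      have Rh: "RR n h" using less.IH[OF lt] hi by blast
      have Re: "RR n (\<lambda>q. if q = y then x else q)" using xy n by (intro RR_collapse) auto
      have "RR n (h \<circ> (\<lambda>q. if q = y then x else q))"
        by (intro RR_comp Re Rh) (use xy in auto)
      then show ?thesis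
        by (rule RR_cong) (use xy in \<open>auto simp: h_def\<close>)
    qed
  qed
qed

lemma part1:
  assumes n: "n \<ge> 2"
  shows "transition_monoid (V_states n) (V_letters n) (V_delta n) = full_transformation_monoid (V_states n)"
proof
  show "transition_monoid (V_states n) (V_letters n) (V_delta n) \<subseteq> full_transformation_monoid (V_states n)"
    unfolding transition_monoid_def full_transformation_monoid_def V_states_def
    by (auto simp: word_act_in)
next
  show "full_transformation_monoid (V_states n) \<subseteq> transition_monoid (V_states n) (V_letters n) (V_delta n)"
  proof
    fix g assume g: "g \<in> full_transformation_monoid (V_states n)"
    then have gi: "\<forall>q<n. g q < n" unfolding full_transformation_monoid_def V_states_def by auto
    have "RR n g" using RR_all_aux[OF n] gi by blast
    then obtain w where w: "w \<in> lists (V_letters n)" "\<forall>q\<in>V_states n. word_act (V_delta n) q w = g q"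
      unfolding RR_def by blast
    have "g = restrict (\<lambda>q. word_act (V_delta n) q w) (V_states n)"
    proof
      fix q show "g q = restrict (\<lambda>q. word_act (V_delta n) q w) (V_states n) q"
        using g w(2) PiE_arb[of g "V_states n" "\<lambda>_. V_states n" q] unfolding full_transformation_monoid_def
        by (cases "q \<in> V_states n") auto
    qed
    then show "g \<in> transition_monoid (V_states n) (V_letters n) (V_delta n)"
      unfolding transition_monoid_def using w(1) by blast
  qed
qed


definition Phi :: "nat set \<Rightarrow> nat" where
  "Phi S = (if card S \<le> 1 then 0 else \<Sum>S)"

lemma step_swap:
  assumes fin: "finite S" and a: "1 \<le> a"
  shows "Phi S \<le> Phi ((Transposition.transpose (a - 1) a) ` S) + 1"
proof -
  let ?h = "Transposition.transpose (a - 1) a"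
  have inj: "inj_on ?h S" by (meson inj_on_subset subset_UNIV inj_transpose)
  have c: "card (?h ` S) = card S" using inj by (rule card_image)
  have "\<Sum>S \<le> (\<Sum>x\<in>S. ?h x + (if x = a then 1 else 0))"
    by (intro sum_mono) (use a in \<open>auto simp: Transposition.transpose_def\<close>)
  also have "\<dots> = (\<Sum>x\<in>S. ?h x) + (\<Sum>x\<in>S. (if x = a then 1 else 0))"
    by (rule sum.distrib)
  also have "(\<Sum>x\<in>S. (if x = a then 1 else 0)) \<le> (1::nat)"
    using fin by (simp add: sum.delta)
  also have "(\<Sum>x\<in>S. ?h x) = \<Sum>(?h ` S)" using sum.reindex[OF inj, of id] by simp
  finally show ?thesis unfolding Phi_def c by simp
qed

lemma step_merge:
  assumes fin: "finite S"
  shows "Phi S \<le> Phi ((\<lambda>q. if q = 0 \<or> q = 1 then 0 else q) ` S) + 1"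
proof (cases "card S \<le> 1")
  case True then show ?thesis by (simp add: Phi_def)
next
  case False
  let ?h = "\<lambda>q::nat. if q = 0 \<or> q = 1 then 0 else q"
  have sub: "S - {0,1} \<subseteq> ?h ` S"
  proof
    fix x assume "x \<in> S - {0,1}" then show "x \<in> ?h ` S" by (intro rev_image_eqI[of x]) auto
  qed
  have s1: "\<Sum>S = \<Sum>(S - {0,1}) + \<Sum>(S \<inter> {0,1})"
    using sum.Int_Diff[OF fin, of "\<lambda>x. x" "{0,1}"] by simp
  have s2: "\<Sum>(S \<inter> {0,1}) \<le> (1::nat)"
  proof -
    have "\<Sum>(S \<inter> {0,1}) \<le> \<Sum>{0::nat,1}" by (intro sum_mono2) auto
    then show ?thesis by simp
  qed
  have s3: "\<Sum>(S - {0,1}) \<le> \<Sum>(?h ` S)"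
    by (intro sum_mono2 sub) (use fin in auto)
  show ?thesis
  proof (cases "card (?h ` S) \<le> 1")
    case False2: False
    then show ?thesis using False s1 s2 s3 by (simp add: Phi_def)
  next
    case True
    have "S \<noteq> {}" using False by auto
    then have "?h ` S \<noteq> {}" by blast
    moreover have "finite (?h ` S)" using fin by simp
    ultimately have "card (?h ` S) \<noteq> 0" by simp
    then have "card (?h ` S) = 1" using True by simp
    then obtain y where y: "?h ` S = {y}" by (rule card_1_singletonE)
    show ?thesis
    proof (cases "y = 0")
      case True
      have "S \<subseteq> {0,1}"
      proof
        fix x assume "x \<in> S" then have "?h x = y" using y by blast
        then show "x \<in> {0,1}" using True by (auto split: if_splits)
      qed
      then have "\<Sum>S \<le> \<Sum>{0::nat,1}" by (intro sum_mono2) auto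
      then show ?thesis using False by (simp add: Phi_def)
    next
      case F: False
      have "S \<subseteq> {y}"
      proof
        fix x assume "x \<in> S" then have "?h x = y" using y by blast
        then show "x \<in> {y}" using F by (auto split: if_splits)
      qed
      then have "card S \<le> 1" using card_mono[of "{y}" S] by simp
      then show ?thesis using False by simp
    qed
  qed
qed

lemma step:
  assumes n: "n \<ge> 2" and fin: "finite S" and a: "a \<in> V_letters n"
  shows "Phi S \<le> Phi ((\<lambda>q. V_delta n q a) ` S) + 1"
proof (cases "a = n")
  case True
  have eq: "(\<lambda>q. V_delta n q a) = (\<lambda>q. if q = 0 \<or> q = 1 then 0 else q)"
    using True n by (auto simp: V_delta_def fun_eq_iff)
  show ?thesis unfolding eq by (rule step_merge[OF fin])
next
  case False
  then have a1: "1 \<le> a" "a \<le> n - 1" using a by (auto simp: V_letters_def)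
  have eq: "(\<lambda>q. V_delta n q a) = Transposition.transpose (a - 1) a"
    using a1 by (auto simp: V_delta_def fun_eq_iff Transposition.transpose_def)
  show ?thesis unfolding eq by (rule step_swap[OF fin a1(1)])
qed

lemma img_Cons: "(\<lambda>q. word_act d q (a # w)) ` S = (\<lambda>q. word_act d q w) ` ((\<lambda>q. d q a) ` S)"
  by (simp add: word_act_Cons image_image)

lemma phi_word:
  assumes n: "n \<ge> 2"
  shows "finite S \<Longrightarrow> w \<in> lists (V_letters n) \<Longrightarrow>
    Phi S \<le> Phi ((\<lambda>q. word_act (V_delta n) q w) ` S) + length w"
proof (induction w arbitrary: S)
  case Nil then show ?case by (simp add: word_act_def)
next
  case (Cons a w)
  have "Phi S \<le> Phi ((\<lambda>q. V_delta n q a) ` S) + 1" using step[OF n Cons.prems(1)] Cons.prems(2) by simp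
  also have "Phi ((\<lambda>q. V_delta n q a) ` S) \<le> Phi ((\<lambda>q. word_act (V_delta n) q w) ` ((\<lambda>q. V_delta n q a) ` S)) + length w"
    using Cons by simp
  finally show ?case by (simp add: img_Cons)
qed

lemma lower:
  assumes n: "n \<ge> 2" and w: "synchronizing_word (V_states n) (V_letters n) (V_delta n) w"
  shows "n * (n - 1) div 2 \<le> length w"
proof -
  have "Phi {0..<n} \<le> Phi ((\<lambda>q. word_act (V_delta n) q w) ` {0..<n}) + length w"
    using phi_word[OF n] w unfolding synchronizing_word_def by simp
  moreover have "Phi ((\<lambda>q. word_act (V_delta n) q w) ` {0..<n}) = 0"
    using w unfolding synchronizing_word_def V_states_def Phi_def by simp
  moreover have "Phi {0..<n} = n * (n - 1) div 2"
    using n unfolding Phi_def by (simp add: Sum_Ico_nat)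
  ultimately show ?thesis by simp
qed


primrec Wd :: "nat \<Rightarrow> nat \<Rightarrow> nat list" where
  "Wd n 0 = [n]"
| "Wd n (Suc k) = Wd n k @ map (\<lambda>t. Suc (Suc k) - t) [0..<Suc k] @ [n]"

lemma img_append:
  "(\<lambda>q. word_act d q (u @ v)) ` S = (\<lambda>q. word_act d q v) ` ((\<lambda>q. word_act d q u) ` S)"
  by (simp add: word_act_append image_image)

lemma img_single: "(\<lambda>q. word_act d q [a]) ` S = (\<lambda>q. d q a) ` S"
  by (simp add: word_act_def)

lemma swap_image:
  assumes "2 \<le> j" "j < n" "\<forall>x\<in>X. j < x"
  shows "(\<lambda>q. V_delta n q j) ` insert 0 (insert j X) = insert 0 (insert (j - 1) X)"
proof -
  have eq: "(\<lambda>q. V_delta n q j) = Transposition.transpose (j - 1) j"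
    using assms by (auto simp: V_delta_def fun_eq_iff Transposition.transpose_def)
  have X: "Transposition.transpose (j - 1) j ` X = (\<lambda>x. x) ` X"
    by (rule image_cong) (use assms in \<open>auto simp: Transposition.transpose_def\<close>)
  have z: "Transposition.transpose (j - 1) j 0 = 0" using assms by (auto simp: Transposition.transpose_def)
  show ?thesis unfolding eq using X z by simp
qed

lemma merge_image:
  assumes "n \<ge> 2" "\<forall>x\<in>X. 2 \<le> x"
  shows "(\<lambda>q. V_delta n q n) ` insert 0 (insert 1 X) = insert 0 X"
proof -
  have eq: "(\<lambda>q. V_delta n q n) = (\<lambda>q. if q = 0 \<or> q = 1 then 0 else q)"
    using assms by (auto simp: V_delta_def fun_eq_iff)
  have X: "(\<lambda>q::nat. if q = 0 \<or> q = 1 then 0 else q) ` X = (\<lambda>x. x) ` X"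
    by (rule image_cong) (use assms in auto)
  show ?thesis unfolding eq using X by simp
qed

lemma down:
  assumes "m < n" "\<forall>x\<in>X. m < x"
  shows "Suc d \<le> m \<Longrightarrow> (\<lambda>q. word_act (V_delta n) q (map (\<lambda>t. m - t) [0..<d])) ` insert 0 (insert m X)
           = insert 0 (insert (m - d) X)"
proof (induction d)
  case 0 then show ?case by (simp add: word_act_def)
next
  case (Suc d)
  have "(\<lambda>q. word_act (V_delta n) q (map (\<lambda>t. m - t) [0..<Suc d])) ` insert 0 (insert m X)
     = (\<lambda>q. V_delta n q (m - d)) ` insert 0 (insert (m - d) X)"
    using Suc by (simp add: img_append img_single)
  also have "\<dots> = insert 0 (insert (m - d - 1) X)"
    using Suc.prems assms by (intro swap_image) auto
  finally show ?case by simp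
qed

lemma Wd_props:
  assumes n: "n \<ge> 2"
  shows "Suc k < n \<Longrightarrow> (\<lambda>q. word_act (V_delta n) q (Wd n k)) ` {0..<n} = insert 0 {Suc (Suc k)..<n}
     \<and> Wd n k \<in> lists (V_letters n) \<and> 2 * length (Wd n k) = Suc k * Suc (Suc k)"
proof (induction k)
  case 0
  have eq: "{0..<n} = insert 0 (insert 1 {2..<n})" using n by auto
  have "(\<lambda>q. V_delta n q n) ` {0..<n} = insert 0 {2..<n}"
    unfolding eq using n by (intro merge_image) auto
  then show ?case using n by (simp add: img_single V_letters_def numeral_2_eq_2)
next
  case (Suc k)
  let ?X = "{Suc (Suc (Suc k))..<n}"
  have IH: "(\<lambda>q. word_act (V_delta n) q (Wd n k)) ` {0..<n} = insert 0 (insert (Suc (Suc k)) ?X)"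
    "Wd n k \<in> lists (V_letters n)" "2 * length (Wd n k) = Suc k * Suc (Suc k)"
    using Suc by auto
  have D: "(\<lambda>q. word_act (V_delta n) q (map (\<lambda>t. Suc (Suc k) - t) [0..<Suc k])) ` insert 0 (insert (Suc (Suc k)) ?X)
     = insert 0 (insert 1 ?X)"
    using down[of "Suc (Suc k)" n ?X "Suc k"] Suc.prems by simp
  have M: "(\<lambda>q. V_delta n q n) ` insert 0 (insert 1 ?X) = insert 0 ?X"
    using n by (intro merge_image) auto
  have img: "(\<lambda>q. word_act (V_delta n) q (Wd n (Suc k))) ` {0..<n} = insert 0 ?X"
    by (simp only: Wd.simps img_append IH(1) D img_single M)
  have L: "map (\<lambda>t. Suc (Suc k) - t) [0..<Suc k] \<in> lists (V_letters n)"
    using Suc.prems by (auto simp: V_letters_def)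
  have "n \<in> V_letters n" using n by (simp add: V_letters_def)
  then show ?case using img IH L by simp
qed

lemma upper:
  assumes n: "n \<ge> 2"
  shows "synchronizing_word (V_states n) (V_letters n) (V_delta n) (Wd n (n - 2))
     \<and> length (Wd n (n - 2)) = n * (n - 1) div 2"
proof -
  have P: "(\<lambda>q. word_act (V_delta n) q (Wd n (n - 2))) ` {0..<n} = insert 0 {Suc (Suc (n - 2))..<n}
     \<and> Wd n (n - 2) \<in> lists (V_letters n) \<and> 2 * length (Wd n (n - 2)) = Suc (n - 2) * Suc (Suc (n - 2))"
    using n by (intro Wd_props) auto
  have e1: "Suc (Suc (n - 2)) = n" "Suc (n - 2) = n - 1" using n by auto
  have "2 * length (Wd n (n - 2)) = (n - 1) * n" using P e1 by simp
  then have "length (Wd n (n - 2)) = n * (n - 1) div 2" by (simp add: mult.commute)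
  then show ?thesis using P e1 unfolding synchronizing_word_def V_states_def by simp
qed

theorem theorem3:
  fixes n :: nat
  assumes "n \<ge> 2"
  shows "transition_monoid (V_states n) (V_letters n) (V_delta n)
           = full_transformation_monoid (V_states n)
       \<and> reset_threshold (V_states n) (V_letters n) (V_delta n) = n * (n - 1) div 2"
proof
  show "transition_monoid (V_states n) (V_letters n) (V_delta n) = full_transformation_monoid (V_states n)"
    using part1[OF assms] .
  show "reset_threshold (V_states n) (V_letters n) (V_delta n) = n * (n - 1) div 2"
    unfolding reset_threshold_def
  proof (rule Least_equality)
    show "\<exists>w. synchronizing_word (V_states n) (V_letters n) (V_delta n) w \<and> length w = n * (n - 1) div 2"
      using upper[OF assms] by blast
  next
    fix m assume "\<exists>w. synchronizing_word (V_states n) (V_letters n) (V_delta n) w \<and> length w = m"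
    then show "n * (n - 1) div 2 \<le> m" using lower[OF assms] by blast
  qed
qed

end
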